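(* Let $q>0$, $d\ge0$ and $\mathcal{D}=\{(b_1,B_1),\ldots,(b_d,B_d)\}\subseteq[q]\times(2^{[q]}\smallsetminus\{\emptyset\})$ with $|B_j|\ge2$ for each $j\in[d]$. Then: (1) $\mathcal{E}_{\mathcal{D}}$ is minimally generated by $\varepsilon_{\mathcal{D},1},\ldots,\varepsilon_{\mathcal{D},q}$; (2) $Q(\mathcal{D})=Q(\mathcal{D}\cup\{(b,B)\})$ for every $(b,B)\in{\sf Div}(\mathcal{E}_{\mathcal{D}})$; (3) if $(b,B)\in{\sf Div}(\mathcal{E}_{\mathcal{D}})$ and $b\notin B$, then $b\in{\sf Base}(\mathcal{D})$.
   Context: Let $\mathsf k$ be a field and $S_{[q]}=\mathsf k[y_A:\emptyset\ne A\subseteq[q]]$. For $\mathcal{D}\subseteq[q]\times(2^{[q]}\smallsetminus\{\emptyset\})$ let $Q(\mathcal{D})=\{A\subseteq[q]: A\ne\emptyset,\ A\cap B\ne\emptyset\text{ for all }(b,B)\in\mathcal{D}\text{ with }b\in A\}$, $\varepsilon_{\mathcal{D},i}=\prod_{A\in Q(\mathcal{D}),\,i\in A}y_A$ for $i\in[q]$, and $\mathcal{E}_{\mathcal{D}}=(\varepsilon_{\mathcal{D},1},\ldots,\varepsilon_{\mathcal{D},q})$. ${\sf Base}(\mathcal{D})=\{b_1,\dots,b_d\}$. A divisibility relation on $\mathcal{E}_{\mathcal{D}}$ is a pair $(b,B)$ with $b\in[q]$, $\emptyset\ne B\subseteq[q]$ and $\varepsilon_{\mathcal{D},b}\mid\mathrm{lcm}(\varepsilon_{\mathcal{D},i}:i\in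 B)$; ${\sf Div}(\mathcal{E}_{\mathcal{D}})$ is the set of all these. *)

theory Defs
  imports "HOL-Library.Poly_Mapping"
begin

text \<open>Polynomials over 'k in variables y_A indexed by sets A of naturals:
  monomials are exponent vectors (finitely supported maps nat set to nat),
  polynomials are finitely supported maps from monomials to coefficients,
  with the convolution product of HOL-Library.Poly_Mapping.\<close>
type_synonym 'k mpoly = "(nat set \<Rightarrow>\<^sub>0 nat) \<Rightarrow>\<^sub>0 'k"

definition vars :: "nat \<Rightarrow> nat set set" where
  "vars q = {A. A \<noteq> {} \<and> A \<subseteq> {1..q}}"

definition S :: "nat \<Rightarrow> ('k::field) mpoly set" where
  "S q = {p. \<forall>m \<in> Poly_Mapping.keys p. Poly_Mapping.keys m \<subseteq> vars q}"

definition Y :: "nat set \<Rightarrow> ('k::field) mpoly" where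
  "Y A = Poly_Mapping.single (Poly_Mapping.single A 1) 1"

definition Q :: "nat \<Rightarrow> (nat \<times> nat set) set \<Rightarrow> nat set set" where
  "Q q D = {A. A \<noteq> {} \<and> A \<subseteq> {1..q} \<and> (\<forall>(b, B) \<in> D. b \<in> A \<longrightarrow> A \<inter> B \<noteq> {})}"

definition eps :: "nat \<Rightarrow> (nat \<times> nat set) set \<Rightarrow> nat \<Rightarrow> ('k::field) mpoly" where
  "eps q D i = (\<Prod>A \<in> {A \<in> Q q D. i \<in> A}. Y A)"

definition Base :: "(nat \<times> nat set) set \<Rightarrow> nat set" where
  "Base D = fst ` D"

definition idealS :: "nat \<Rightarrow> ('k::field) mpoly set \<Rightarrow> 'k mpoly set" where
  "idealS q G = {(\<Sum>g\<in>F. r g * g) | F r. finite F \<and> F \<subseteq> G \<and> (\<forall>g\<in>F. r g \<in> S q)}"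

definition minimally_generated :: "nat \<Rightarrow> (nat \<Rightarrow> ('k::field) mpoly) \<Rightarrow> bool" where
  "minimally_generated q g \<longleftrightarrow>
     (\<forall>J. J \<subset> {1..q} \<longrightarrow> idealS q (g ` J) \<noteq> idealS q (g ` {1..q}))"

definition dvdS :: "nat \<Rightarrow> ('k::field) mpoly \<Rightarrow> 'k mpoly \<Rightarrow> bool" where
  "dvdS q a b \<longleftrightarrow> (\<exists>c \<in> S q. b = c * a)"

definition is_lcmS :: "nat \<Rightarrow> ('k::field) mpoly set \<Rightarrow> 'k mpoly \<Rightarrow> bool" where
  "is_lcmS q G l \<longleftrightarrow> l \<in> S q \<and> (\<forall>g\<in>G. dvdS q g l) \<and>
     (\<forall>m \<in> S q. (\<forall>g\<in>G. dvdS q g m) \<longrightarrow> dvdS q l m)"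

definition Div :: "nat \<Rightarrow> (nat \<Rightarrow> ('k::field) mpoly) \<Rightarrow> (nat \<times> nat set) set" where
  "Div q g = {(b, B). b \<in> {1..q} \<and> B \<noteq> {} \<and> B \<subseteq> {1..q} \<and>
      (\<exists>l. is_lcmS q (g ` B) l \<and> dvdS q (g b) l)}"

end

theory Submission
  imports Defs
begin

definition ex :: "nat \<Rightarrow> (nat \<times> nat set) set \<Rightarrow> nat \<Rightarrow> (nat set \<Rightarrow>\<^sub>0 nat)" where
  "ex q D i = (\<Sum>A\<in>{A \<in> Q q D. i \<in> A}. Poly_Mapping.single A 1)"

lemma finQ: "finite {A \<in> Q q D. i \<in> A}"
proof -
  have "{A \<in> Q q D. i \<in> A} \<subseteq> Pow {1..q}" by (auto simp: Q_def)
  then show ?thesis by (rule finite_subset) simp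
qed

lemma lookup_ex: "Poly_Mapping.lookup (ex q D i) A = (if A \<in> Q q D \<and> i \<in> A then 1 else 0)"
  unfolding ex_def lookup_sum lookup_single
  using finQ[of q D i] by (simp add: when_def)

lemma prod_single:
  "finite T \<Longrightarrow> (\<Prod>x\<in>T. Poly_Mapping.single (f x) (1::'k::comm_semiring_1)) = Poly_Mapping.single (\<Sum>x\<in>T. f x) 1"
  by (induction T rule: finite_induct) (simp_all add: mult_single)

lemma eps_eq: "(eps q D i :: 'k::field mpoly) = Poly_Mapping.single (ex q D i) 1"
  unfolding eps_def Y_def ex_def using prod_single[OF finQ] by simp

lemma key0:
  fixes a m :: "nat set \<Rightarrow>\<^sub>0 nat"
  assumes "Poly_Mapping.lookup a A > Poly_Mapping.lookup m A"
  shows "Poly_Mapping.lookup (r * Poly_Mapping.single a (1::'k::field)) m = 0"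
proof -
  have "m \<notin> Poly_Mapping.keys (r * Poly_Mapping.single a (1::'k))"
  proof
    assume "m \<in> Poly_Mapping.keys (r * Poly_Mapping.single a (1::'k))"
    then obtain x where "m = x + a" using keys_mult[of r "Poly_Mapping.single a (1::'k)"] by auto
    then have "Poly_Mapping.lookup m A = Poly_Mapping.lookup x A + Poly_Mapping.lookup a A"
      by (simp add: lookup_add)
    then show False using assms by linarith
  qed
  then show ?thesis by (simp add: in_keys_iff)
qed

lemma S_single: "Poly_Mapping.keys a \<subseteq> vars q \<Longrightarrow> (Poly_Mapping.single a (1::'k::field)) \<in> S q"
  by (simp add: S_def)

lemma keys_ex: "Poly_Mapping.keys (ex q D i) \<subseteq> vars q"
proof -
  have "Poly_Mapping.keys (ex q D i) \<subseteq> (\<Union>A\<in>{A \<in> Q q D. i \<in> A}. Poly_Mapping.keys (Poly_Mapping.single A (1::nat)))"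
    unfolding ex_def by (rule keys_sum)
  also have "\<dots> \<subseteq> vars q" by (auto simp: Q_def vars_def)
  finally show ?thesis .
qed

lemma keys_sum_ex: "Poly_Mapping.keys (\<Sum>j\<in>B. ex q D j) \<subseteq> vars q"
  using keys_sum[of "\<lambda>j. ex q D j" B] keys_ex by blast

lemma div_key:
  assumes "(b, B) \<in> Div q (eps q D :: nat \<Rightarrow> 'k::field mpoly)"
    and "A \<in> Q q D" and "b \<in> A"
  shows "A \<inter> B \<noteq> {}"
proof
  assume dis: "A \<inter> B = {}"
  from assms(1) obtain l :: "'k mpoly" where lcm: "is_lcmS q (eps q D ` B) l"
    and dv: "dvdS q (eps q D b) l" and B: "B \<subseteq> {1..q}"
    unfolding Div_def by auto
  have finB: "finite B" using B finite_subset by blast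
  define M where "M = (\<Sum>j\<in>B. ex q D j)"
  define m :: "'k mpoly" where "m = Poly_Mapping.single M 1"
  have mS: "m \<in> S q" unfolding m_def M_def by (rule S_single[OF keys_sum_ex])
  have "\<forall>g\<in>eps q D ` B. dvdS q g m"
  proof
    fix g :: "'k mpoly" assume "g \<in> eps q D ` B"
    then obtain i where i: "i \<in> B" "g = eps q D i" by auto
    have "M = (\<Sum>j\<in>B-{i}. ex q D j) + ex q D i"
      unfolding M_def using sum.remove[OF finB i(1)] by (simp add: add.commute)
    then have "m = Poly_Mapping.single (\<Sum>j\<in>B-{i}. ex q D j) 1 * g"
      unfolding m_def i(2) eps_eq by (simp add: mult_single)
    then show "dvdS q g m" unfolding dvdS_def
      using S_single[OF keys_sum_ex] by blast
  qed
  with lcm mS have "dvdS q l m" unfolding is_lcmS_def by blast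
  then obtain c where c: "m = c * l" unfolding dvdS_def by blast
  from dv obtain c' where c': "l = c' * eps q D b" unfolding dvdS_def by blast
  have meq: "m = (c * c') * Poly_Mapping.single (ex q D b) 1"
    using c c' by (simp add: mult.assoc eps_eq)
  have "Poly_Mapping.lookup M A = (\<Sum>j\<in>B. Poly_Mapping.lookup (ex q D j) A)"
    unfolding M_def lookup_sum ..
  also have "\<dots> = 0" using dis by (auto simp: lookup_ex intro!: sum.neutral)
  finally have "Poly_Mapping.lookup (ex q D b) A > Poly_Mapping.lookup M A"
    using assms by (simp add: lookup_ex)
  then have "Poly_Mapping.lookup m M = 0" unfolding meq by (rule key0)
  then show False unfolding m_def by simp
qed

theorem proposition3p3:
  fixes q :: nat and D :: "(nat \<times> nat set) set"
  assumes "q > 0"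
    and "D \<subseteq> {1..q} \<times> {B. B \<noteq> {} \<and> B \<subseteq> {1..q}}"
    and "\<forall>(b, B) \<in> D. card B \<ge> 2"
  shows "minimally_generated q (eps q D :: nat \<Rightarrow> 'k::field mpoly) \<and>
    (\<forall>(b, B) \<in> Div q (eps q D :: nat \<Rightarrow> 'k::field mpoly). Q q D = Q q (D \<union> {(b, B)})) \<and>
    (\<forall>(b, B) \<in> Div q (eps q D :: nat \<Rightarrow> 'k::field mpoly). b \<notin> B \<longrightarrow> b \<in> Base D)"
proof (intro conjI)
  show "minimally_generated q (eps q D :: nat \<Rightarrow> 'k::field mpoly)"
    unfolding minimally_generated_def
  proof (intro allI impI)
    fix J assume J: "J \<subset> {1..q}"
    then obtain i where i: "i \<in> {1..q}" "i \<notin> J" by blast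
    have one: "(1::'k mpoly) \<in> S q" by (simp add: S_def)
    have "eps q D i \<in> idealS q ((eps q D :: nat \<Rightarrow> 'k mpoly) ` {1..q})"
      unfolding idealS_def
      apply (rule CollectI)
      apply (rule exI[of _ "{eps q D i}"])
      apply (rule exI[of _ "\<lambda>_. 1"])
      using i one by auto
    moreover have "eps q D i \<notin> idealS q ((eps q D :: nat \<Rightarrow> 'k mpoly) ` J)"
    proof
      assume "eps q D i \<in> idealS q ((eps q D :: nat \<Rightarrow> 'k mpoly) ` J)"
      then obtain F r where F: "F \<subseteq> eps q D ` J"
        and eq: "(eps q D i :: 'k mpoly) = (\<Sum>g\<in>F. r g * g)"
        unfolding idealS_def by blast
      have "Poly_Mapping.lookup (\<Sum>g\<in>F. r g * g) (ex q D i) = (\<Sum>g\<in>F. Poly_Mapping.lookup (r g * g) (ex q D i))"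
        by (rule lookup_sum)
      also have "\<dots> = 0"
      proof (rule sum.neutral, rule ballI)
        fix g assume "g \<in> F"
        then obtain j where j: "j \<in> J" "g = eps q D j" using F by blast
        have jq: "j \<in> {1..q}" "j \<noteq> i" using j J i by auto
        define A where "A = {1..q} - {i}"
        have AQ: "A \<in> Q q D"
          unfolding Q_def
        proof (intro CollectI conjI ballI)
          show "A \<noteq> {}" using jq A_def by blast
          show "A \<subseteq> {1..q}" using A_def by blast
          fix x assume x: "x \<in> D"
          obtain b B where bB: "x = (b, B)" by force
          have Bq: "B \<subseteq> {1..q}" and cB: "card B \<ge> 2" using x bB assms(2,3) by auto
          have "A \<inter> B \<noteq> {}"
          proof
            assume "A \<inter> B = {}"
            then have "B \<subseteq> {i}" using Bq A_def by blast
            then have "card B \<le> 1" using card_mono[of "{i}" B] by simp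
            then show False using cB by simp
          qed
          then show "case x of (b, B) \<Rightarrow> b \<in> A \<longrightarrow> A \<inter> B \<noteq> {}" using bB by simp
        qed
        have "Poly_Mapping.lookup (ex q D j) A > Poly_Mapping.lookup (ex q D i) A"
          using AQ jq by (simp add: lookup_ex A_def)
        then show "Poly_Mapping.lookup (r g * g) (ex q D i) = 0"
          unfolding j(2) eps_eq by (rule key0)
      qed
      finally have "Poly_Mapping.lookup (eps q D i :: 'k mpoly) (ex q D i) = 0" using eq by simp
      then show False by (simp add: eps_eq)
    qed
    ultimately show "idealS q ((eps q D :: nat \<Rightarrow> 'k mpoly) ` J) \<noteq> idealS q (eps q D ` {1..q})"
      by blast
  qed
  show "\<forall>(b, B) \<in> Div q (eps q D :: nat \<Rightarrow> 'k::field mpoly). Q q D = Q q (D \<union> {(b, B)})"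
  proof (intro ballI, clarify)
    fix b B assume bB: "(b, B) \<in> Div q (eps q D :: nat \<Rightarrow> 'k::field mpoly)"
    show "Q q D = Q q (D \<union> {(b, B)})"
      using div_key[OF bB] unfolding Q_def by auto
  qed
  show "\<forall>(b, B) \<in> Div q (eps q D :: nat \<Rightarrow> 'k::field mpoly). b \<notin> B \<longrightarrow> b \<in> Base D"
  proof (intro ballI, clarify)
    fix b B assume bB: "(b, B) \<in> Div q (eps q D :: nat \<Rightarrow> 'k::field mpoly)" and nb: "b \<notin> B"
    show "b \<in> Base D"
    proof (rule ccontr)
      assume nB: "b \<notin> Base D"
      have bq: "b \<in> {1..q}" using bB unfolding Div_def by auto
      have "{b} \<in> Q q D" unfolding Q_def using bq nB by (force simp: Base_def)
      from div_key[OF bB this] nb show False by simp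
    qed
  qed
qed

end
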